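(* Let $(M,d,\mu)$ be a quasi-$b$-geodesic metric measure space satisfying $(VD)_{\mathrm{loc}}$, $(VD)_\infty$ and the Poincaré inequality $(P)_h$ at scale $h$. Suppose that a Markov operator $P$ has a kernel $p$ that is $(h,h')$-compatible with respect to $\mu$ for some $h>b$. Then there exist $a>0$, $\epsilon_0>0$ such that $$\|P_{B(x,r)}\|_{2\to2}:=\sup_{f\in L^2(B(x,r)),\ \|f\|_2=1}\|P_{B(x,r)}f\|_2\le1-\frac{a}{r^2}$$ for all $x\in M$ and all real $r$ with $h'\le r\le\epsilon_0\operatorname{diam}(M)$.
   Context: Metric measure space: locally compact metric space with a Radon measure of full support; $B(x,r)$ closed balls, $V(x,r)=\mu(B(x,r))$. Quasi-$b$-geodesic: there is $C$ with $d_b\le Cd$, where $d_b(x,y)=\inf\sum_i d(x_i,x_{i+1})$ over sequences $x=x_0,\dots,x_m=y$ with $d(x_i,x_{i+1})\le b$. $(VD)_{\mathrm{loc}}$: for each $r>0$ there is $C_r$ with $V(x,2r)\le C_rV(x,r)$ for all $x$. $(VD)_\infty$: there are $r_0,C>0$ with $V(x,2r)\le CV(x,r)$ for all $x$, $r\ge r_0$. $|\nabla f|_h(x)=\left(\frac1{V(x,h)}\int_{B(x,h)}|f(y)-f(x)|^2\mu(dy)\right)^{1/2}$; $(P)_h$: there are $C_1>0$, $C_2\ge1$, $r_0>0$ with $\int_{B(x,r)}|f-f_{B(x,r)}|^2d\mu\le C_1r^2\int_{B(x,C_2r)}|\nabla f|_h^2d\mu$ for all $f\in L^\infty_{\mathrm{loc}}$,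 $x$, $r\ge r_0$. Kernel: $p_1\ge0$, $\int p_1(x,y)\mu(dy)=1$, $p_1(x,\cdot)\in L^\infty$, $Pf(x)=\int p_1(x,y)f(y)\mu(dy)$, $p_2(x,y)=\int p_1(x,z)p_1(y,z)\mu(dz)$. $(h,h')$-compatible: $p_1(x,y)=p_1(y,x)$ $\mu\times\mu$-a.e.; there are $c_1,C_1>0$, $h'\ge h$, with $\frac{c_1}{V(x,h)}\mathbf{1}_{B(x,h)}(y)\le p_1(x,y)\le\frac{C_1}{V(x,h')}\mathbf{1}_{B(x,h')}(y)$ for all $x$, $\mu$-a.e. $y$; there is $\alpha>0$ with $p_2\ge\alpha p_1$ ($\mu$-a.e.). For a ball $B$, $L^2(B)=L^2(B,\mu|_B)$ and $P_Bf(x)=\int_Bf(y)p_1(x,y)\mu(dy)$ for $x\in B$. $\operatorname{diam}(M)=\sup_{x,y}d(x,y)\in(0,\infty]$. *)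

theory Defs
  imports "HOL-Analysis.Analysis"
begin

definition radon_full_support :: "'a::metric_space measure \<Rightarrow> bool" where
  "radon_full_support M \<longleftrightarrow>
     sets M = sets borel \<and>
     (\<forall>K. compact K \<longrightarrow> emeasure M K < \<infinity>) \<and>
     (\<forall>U. open U \<longrightarrow> emeasure M U = (SUP K\<in>{K. compact K \<and> K \<subseteq> U}. emeasure M K)) \<and>
     (\<forall>A\<in>sets M. emeasure M A = (INF U\<in>{U. open U \<and> A \<subseteq> U}. emeasure M U)) \<and>
     (\<forall>U. open U \<longrightarrow> U \<noteq> {} \<longrightarrow> emeasure M U > 0)"

definition metric_measure_space :: "'a::metric_space measure \<Rightarrow> bool" where
  "metric_measure_space M \<longleftrightarrow> locally compact (UNIV :: 'a set) \<and> radon_full_support M"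

definition V :: "'a::metric_space measure \<Rightarrow> 'a \<Rightarrow> real \<Rightarrow> ennreal" where
  "V M x r = emeasure M (cball x r)"

definition chain_length :: "'a::metric_space list \<Rightarrow> real" where
  "chain_length xs = sum_list (map (\<lambda>(u,v). dist u v) (zip xs (tl xs)))"

definition b_chain :: "real \<Rightarrow> 'a::metric_space \<Rightarrow> 'a \<Rightarrow> 'a list \<Rightarrow> bool" where
  "b_chain b x y xs \<longleftrightarrow> xs \<noteq> [] \<and> hd xs = x \<and> last xs = y \<and>
     (\<forall>i. Suc i < length xs \<longrightarrow> dist (xs ! i) (xs ! Suc i) \<le> b)"

definition dist_b :: "real \<Rightarrow> 'a::metric_space \<Rightarrow> 'a \<Rightarrow> ereal" where
  "dist_b b x y = Inf {ereal (chain_length xs) | xs. b_chain b x y xs}"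

definition quasi_b_geodesic :: "real \<Rightarrow> 'a::metric_space itself \<Rightarrow> bool" where
  "quasi_b_geodesic b _ \<longleftrightarrow> (\<exists>C. \<forall>x y::'a. dist_b b x y \<le> ereal (C * dist x y))"

definition VD_loc :: "'a::metric_space measure \<Rightarrow> bool" where
  "VD_loc M \<longleftrightarrow> (\<forall>r>0. \<exists>C. \<forall>x. V M x (2*r) \<le> ennreal C * V M x r)"

definition VD_infty :: "'a::metric_space measure \<Rightarrow> bool" where
  "VD_infty M \<longleftrightarrow> (\<exists>r0>0. \<exists>C>0. \<forall>x. \<forall>r\<ge>r0. V M x (2*r) \<le> ennreal C * V M x r)"

definition L_infty_loc :: "'a::metric_space measure \<Rightarrow> ('a \<Rightarrow> real) \<Rightarrow> bool" where
  "L_infty_loc M f \<longleftrightarrow> f \<in> borel_measurable M \<and>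
     (\<forall>K. compact K \<longrightarrow> (\<exists>C. AE y in M. y \<in> K \<longrightarrow> \<bar>f y\<bar> \<le> C))"

definition grad_sq :: "'a::metric_space measure \<Rightarrow> real \<Rightarrow> ('a \<Rightarrow> real) \<Rightarrow> 'a \<Rightarrow> ennreal" where
  "grad_sq M h f x =
     (\<integral>\<^sup>+ y. indicator (cball x h) y * ennreal ((f y - f x)^2) \<partial>M) / V M x h"

definition ball_avg :: "'a::metric_space measure \<Rightarrow> ('a \<Rightarrow> real) \<Rightarrow> 'a set \<Rightarrow> real" where
  "ball_avg M f B = (LINT y:B|M. f y) / measure M B"

definition poincare_h :: "'a::metric_space measure \<Rightarrow> real \<Rightarrow> bool" where
  "poincare_h M h \<longleftrightarrow> (\<exists>C1>0. \<exists>C2\<ge>1. \<exists>r0>0. \<forall>f x r. L_infty_loc M f \<longrightarrow> r \<ge> r0 \<longrightarrow>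
     (\<integral>\<^sup>+ y. indicator (cball x r) y * ennreal ((f y - ball_avg M f (cball x r))^2) \<partial>M)
       \<le> ennreal (C1 * r^2) * (\<integral>\<^sup>+ y. indicator (cball x (C2*r)) y * grad_sq M h f y \<partial>M))"

definition markov_kernel :: "'a::metric_space measure \<Rightarrow> ('a \<Rightarrow> 'a \<Rightarrow> real) \<Rightarrow> bool" where
  "markov_kernel M p \<longleftrightarrow>
     (\<lambda>z. p (fst z) (snd z)) \<in> borel_measurable (M \<Otimes>\<^sub>M M) \<and>
     (\<forall>x y. p x y \<ge> 0) \<and>
     (\<forall>x. (\<integral>\<^sup>+ y. ennreal (p x y) \<partial>M) = 1) \<and>
     (\<forall>x. \<exists>C. AE y in M. \<bar>p x y\<bar> \<le> C)"

definition p2 :: "'a::metric_space measure \<Rightarrow> ('a \<Rightarrow> 'a \<Rightarrow> real) \<Rightarrow> 'a \<Rightarrow> 'a \<Rightarrow> real" where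
  "p2 M p x y = (\<integral> z. p x z * p y z \<partial>M)"

definition compatible :: "'a::metric_space measure \<Rightarrow> ('a \<Rightarrow> 'a \<Rightarrow> real) \<Rightarrow> real \<Rightarrow> real \<Rightarrow> bool" where
  "compatible M p h h' \<longleftrightarrow>
     (AE z in M \<Otimes>\<^sub>M M. p (fst z) (snd z) = p (snd z) (fst z)) \<and>
     h' \<ge> h \<and>
     (\<exists>c1>0. \<exists>C1>0. \<forall>x. AE y in M.
        c1 / measure M (cball x h) * indicator (cball x h) y \<le> p x y \<and>
        p x y \<le> C1 / measure M (cball x h') * indicator (cball x h') y) \<and>
     (\<exists>\<alpha>>0. AE z in M \<Otimes>\<^sub>M M. p2 M p (fst z) (snd z) \<ge> \<alpha> * p (fst z) (snd z))"

definition in_L2_on :: "'a::metric_space measure \<Rightarrow> 'a set \<Rightarrow> ('a \<Rightarrow> real) \<Rightarrow> bool" where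
  "in_L2_on M B f \<longleftrightarrow> f \<in> borel_measurable M \<and> set_integrable M B (\<lambda>y. (f y)^2)"

definition L2_norm_on :: "'a::metric_space measure \<Rightarrow> 'a set \<Rightarrow> ('a \<Rightarrow> real) \<Rightarrow> real" where
  "L2_norm_on M B f = sqrt (LINT y:B|M. (f y)^2)"

definition P_on :: "'a::metric_space measure \<Rightarrow> ('a \<Rightarrow> 'a \<Rightarrow> real) \<Rightarrow> 'a set \<Rightarrow> ('a \<Rightarrow> real) \<Rightarrow> 'a \<Rightarrow> real" where
  "P_on M p B f x = (LINT y:B|M. f y * p x y)"

definition op_norm_on :: "'a::metric_space measure \<Rightarrow> ('a \<Rightarrow> 'a \<Rightarrow> real) \<Rightarrow> 'a set \<Rightarrow> ereal" where
  "op_norm_on M p B =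
     (SUP f\<in>{f. in_L2_on M B f \<and> L2_norm_on M B f = 1}. ereal (L2_norm_on M B (P_on M p B f)))"

definition diamM :: "'a::metric_space itself \<Rightarrow> ereal" where
  "diamM _ = (SUP xy\<in>(UNIV::('a\<times>'a) set). ereal (dist (fst xy) (snd xy)))"

end

theory Submission
  imports Defs
begin

locale setting =
  fixes M :: "'a::metric_space measure"
    and p :: "'a \<Rightarrow> 'a \<Rightarrow> real"
    and b h h' :: real
  assumes mms: "metric_measure_space M"
    and bpos: "0 < b"
    and qg: "quasi_b_geodesic b TYPE('a)"
    and vdl: "VD_loc M" and vdi: "VD_infty M"
    and poinc: "poincare_h M h"
    and mk: "markov_kernel M p"
    and compat: "compatible M p h h'"
    and hb: "h > b"
begin

lemma sets_M: "sets M = sets borel"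
  using mms unfolding metric_measure_space_def radon_full_support_def by auto

lemma space_M[simp]: "space M = UNIV"
  using sets_eq_imp_space_eq[OF sets_M] by simp

lemma meas_M[measurable_cong]: "sets M = sets borel" by (rule sets_M)

lemma hpos: "h > 0" using bpos hb by simp
lemma hh': "h \<le> h'" using compat unfolding compatible_def by auto
lemma h'pos: "h' > 0" using hpos hh' by simp

lemma open_pos: "open U \<Longrightarrow> U \<noteq> {} \<Longrightarrow> emeasure M U > 0"
  using mms unfolding metric_measure_space_def radon_full_support_def by auto

lemma p_nonneg: "p x y \<ge> 0" using mk unfolding markov_kernel_def by auto
lemma p_int1: "(\<integral>\<^sup>+ y. ennreal (p x y) \<partial>M) = 1" using mk unfolding markov_kernel_def by auto
lemma p_meas: "(\<lambda>z. p (fst z) (snd z)) \<in> borel_measurable (M \<Otimes>\<^sub>M M)"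
  using mk unfolding markov_kernel_def by auto

lemma p_meas2: "p x \<in> borel_measurable M"
proof -
  have "(\<lambda>y. (\<lambda>z. p (fst z) (snd z)) (x, y)) \<in> borel_measurable M"
    by (rule measurable_Pair2[OF p_meas]) simp
  then show ?thesis by simp
qed

lemma compat_bounds:
  obtains c1 C1 where "c1 > 0" "C1 > 0" "\<And>x. AE y in M. c1 / measure M (cball x h) * indicator (cball x h) y \<le> p x y \<and>
        p x y \<le> C1 / measure M (cball x h') * indicator (cball x h') y"
proof -
  from compat obtain c1 C1 where "c1 > 0" "C1 > 0" "\<forall>x. AE y in M. c1 / measure M (cball x h) * indicator (cball x h) y \<le> p x y \<and>
        p x y \<le> C1 / measure M (cball x h') * indicator (cball x h') y"
    unfolding compatible_def by blast
  then show thesis using that by blast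
qed

lemma cball_h'_pos: "measure M (cball x h') > 0"
proof (rule ccontr)
  assume "\<not> measure M (cball x h') > 0"
  then have z: "measure M (cball x h') = 0" using measure_nonneg[of M] by (meson not_less order_antisym)
  obtain c1 C1 where "c1 > 0" "C1 > 0" and cb: "\<And>w. AE y in M. c1 / measure M (cball w h) * indicator (cball w h) y \<le> p w y \<and>
        p w y \<le> C1 / measure M (cball w h') * indicator (cball w h') y" by (rule compat_bounds) blast
  have "AE y in M. p x y \<le> 0" using cb[of x] by eventually_elim (use z in auto)
  then have "AE y in M. ennreal (p x y) = 0" by eventually_elim (use p_nonneg in \<open>auto intro: antisym\<close>)
  then have "(\<integral>\<^sup>+ y. ennreal (p x y) \<partial>M) = 0" by (simp add: nn_integral_cong_AE)
  then show False using p_int1[of x] by simp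
qed

lemma cball_h'_fin: "emeasure M (cball x h') < \<infinity>"
  using cball_h'_pos[of x] unfolding measure_def by (cases "emeasure M (cball x h') = \<infinity>") (auto simp: less_top)

lemma ball_fin_pow: "emeasure M (cball x (2^k * h')) < \<infinity>"
proof (induction k)
  case 0 then show ?case using cball_h'_fin by simp
next
  case (Suc k)
  have "2^k * h' > 0" using h'pos by simp
  then obtain C where "\<forall>x. V M x (2*(2^k*h')) \<le> ennreal C * V M x (2^k*h')"
    using vdl unfolding VD_loc_def by blast
  then have "emeasure M (cball x (2^Suc k * h')) \<le> ennreal C * emeasure M (cball x (2^k*h'))"
    unfolding V_def by (simp add: mult.assoc)
  also have "\<dots> < \<infinity>" using Suc by (simp add: ennreal_mult_less_top)
  finally show ?case .
qed

lemma ball_fin: "emeasure M (cball x r) < \<infinity>"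
proof -
  obtain k :: nat where "r / h' < 2^k" using real_arch_pow[of 2 "r/h'"] by auto
  then have "r \<le> 2^k * h'" using h'pos by (simp add: divide_less_eq)
  then have "emeasure M (cball x r) \<le> emeasure M (cball x (2^k * h'))"
    by (intro emeasure_mono) (auto simp: sets_M)
  then show ?thesis using ball_fin_pow[of x k] by (meson le_less_trans)
qed

lemma ball_fin': "emeasure M (cball x r) \<noteq> \<infinity>" "emeasure M (cball x r) \<noteq> top" using ball_fin[of x r] by auto

lemma emeasure_ball: "emeasure M (cball x r) = ennreal (measure M (cball x r))"
  using ball_fin' by (simp add: emeasure_eq_ennreal_measure)

lemma ball_pos: "r > 0 \<Longrightarrow> measure M (cball x r) > 0"
proof -
  assume r: "r > 0"
  have "emeasure M (ball x r) > 0" using open_pos[of "ball x r"] r by simp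
  also have "emeasure M (ball x r) \<le> emeasure M (cball x r)"
    by (intro emeasure_mono) (auto simp: sets_M)
  finally show ?thesis using emeasure_ball[of x r] by simp
qed

sublocale sigma_finite_measure M
proof
  let ?A = "range (\<lambda>k::nat. cball (undefined::'a) (real k))"
  have "\<Union> ?A = UNIV"
  proof safe
    fix y :: 'a
    obtain k :: nat where "dist undefined y \<le> real k" using real_nat_ceiling_ge by blast
    then show "y \<in> \<Union> ?A" by auto
  qed auto
  then show "\<exists>A. countable A \<and> A \<subseteq> sets M \<and> \<Union> A = space M \<and> (\<forall>a\<in>A. emeasure M a \<noteq> \<infinity>)"
    by (intro exI[of _ ?A]) (use ball_fin' in \<open>auto simp: sets_M top_unique\<close>)
qed

sublocale PP: pair_sigma_finite M M ..

end

lemma chain_mid: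
  fixes x :: "'a::metric_space"
  assumes ne: "xs \<noteq> []" and hd: "hd xs = x"
    and st: "\<forall>i. Suc i < length xs \<longrightarrow> dist (xs!i) (xs!Suc i) \<le> b"
    and t: "0 \<le> t" "t \<le> dist x (last xs)" and b: "0 \<le> b"
  shows "\<exists>y. t \<le> dist x y \<and> dist x y \<le> t + b"
proof (cases "t = 0")
  case True then show ?thesis by (intro exI[of _ x]) (simp add: b)
next
  case False
  let ?P = "\<lambda>i. i < length xs \<and> t \<le> dist x (xs!i)"
  have ex: "?P (length xs - 1)" using ne t by (simp add: last_conv_nth)
  define i where "i = (LEAST i. ?P i)"
  have Pi: "?P i" unfolding i_def by (rule LeastI[of ?P, OF ex])
  have i0: "i \<noteq> 0"
  proof
    assume "i = 0"
    then have "xs ! i = x" using ne hd by (simp add: hd_conv_nth)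
    then show False using Pi False t by simp
  qed
  then obtain j where j: "i = Suc j" by (cases i) auto
  have "\<not> ?P j" using j unfolding i_def using not_less_Least[of j ?P] i_def by simp
  then have "dist x (xs!j) < t" using Pi j by auto
  moreover have "dist (xs!j) (xs!i) \<le> b" using st Pi j by auto
  ultimately have "dist x (xs!i) \<le> t + b" using dist_triangle[of x "xs!i" "xs!j"] by linarith
  then show ?thesis using Pi by blast
qed

lemma qg_chain:
  fixes x z :: "'a::metric_space"
  assumes "quasi_b_geodesic b TYPE('a)"
  shows "\<exists>xs. b_chain b x z xs"
proof (rule ccontr)
  assume "\<not> ?thesis"
  then have "{ereal (chain_length xs) | xs. b_chain b x z xs} = {}" by auto
  then have "dist_b b x z = \<infinity>" unfolding dist_b_def by (simp add: top_ereal_def)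
  moreover obtain C where "\<forall>x y::'a. dist_b b x y \<le> ereal (C * dist x y)"
    using assms unfolding quasi_b_geodesic_def by blast
  ultimately show False by (metis PInfty_neq_ereal(1) ereal_infty_less_eq(1))
qed

lemma qg_mid:
  fixes x z :: "'a::metric_space"
  assumes "quasi_b_geodesic b TYPE('a)" "0 \<le> b" "0 \<le> t" "t \<le> dist x z"
  shows "\<exists>y. t \<le> dist x y \<and> dist x y \<le> t + b"
proof -
  obtain xs where "b_chain b x z xs" using qg_chain[OF assms(1)] by blast
  then show ?thesis unfolding b_chain_def using chain_mid[of xs x b t] assms by auto
qed

context setting begin

lemma vdi_bounds:
  obtains r0 C where "r0 > 0" "C > 0" "\<And>x r. r \<ge> r0 \<Longrightarrow> measure M (cball x (2*r)) \<le> C * measure M (cball x r)"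
proof -
  from vdi obtain r0 C where r0: "r0 > 0" "C > 0" and H: "\<forall>x. \<forall>r\<ge>r0. V M x (2*r) \<le> ennreal C * V M x r"
    unfolding VD_infty_def by blast
  have "measure M (cball x (2*r)) \<le> C * measure M (cball x r)" if "r \<ge> r0" for x r
  proof -
    have "ennreal (measure M (cball x (2*r))) \<le> ennreal (C * measure M (cball x r))"
      using H that r0 unfolding V_def emeasure_ball by (simp add: ennreal_mult)
    then show ?thesis using r0 by (simp add: ennreal_le_iff)
  qed
  then show thesis using that r0 by blast
qed

lemma fmeas_ball[simp]: "cball x r \<in> fmeasurable M"
  using ball_fin'[of x r] by (auto simp: fmeasurable_def sets_M less_top)

lemma rev_step:
  assumes r0: "r0 > 0" "C > 0" "\<And>x r. r \<ge> r0 \<Longrightarrow> measure M (cball x (2*r)) \<le> C * measure M (cball x r)"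
    and s: "s \<ge> 2*r0" "s \<ge> h'" and z: "dist x z \<ge> 2* s"
  shows "(1 + 1/C^3) * measure M (cball x s) \<le> measure M (cball x (4 * s))"
proof -
  have sb: "b < s" using hb hh' s by simp
  obtain y where y: "2* s \<le> dist x y" "dist x y \<le> 2* s + b"
    using qg_mid[OF qg, of "2* s" x z] bpos z sb by auto
  have disj: "cball y (s/2) \<inter> cball x s = {}"
  proof (rule ccontr)
    assume "cball y (s/2) \<inter> cball x s \<noteq> {}"
    then obtain w where "dist y w \<le> s/2" "dist x w \<le> s" by auto
    then have "dist x y \<le> 3/2* s" using dist_triangle[of x y w] by (simp add: dist_commute)
    then show False using y sb bpos by linarith
  qed
  have sub: "cball y (s/2) \<union> cball x s \<subseteq> cball x (4 * s)"
  proof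
    fix w assume "w \<in> cball y (s/2) \<union> cball x s"
    then show "w \<in> cball x (4 * s)"
    proof
      assume "w \<in> cball y (s/2)"
      then have "dist x w \<le> dist x y + s/2" using dist_triangle[of x w y] by simp
      then show ?thesis using y sb by simp
    qed (use sb bpos in auto)
  qed
  have sub2: "cball x s \<subseteq> cball y (4 * s)"
  proof
    fix w assume "w \<in> cball x s"
    then have "dist y w \<le> dist x y + s" using dist_triangle[of y w x] by (simp add: dist_commute)
    then show "w \<in> cball y (4 * s)" using y sb by simp
  qed
  have m1: "measure M (cball y (2*(s/2))) \<le> C * measure M (cball y (s/2))" using r0(3)[of "s/2"] s by simp
  have m2: "measure M (cball y (2* s)) \<le> C * measure M (cball y s)" using r0(3)[of "s"] s r0 by simp
  have m3: "measure M (cball y (2*(2* s))) \<le> C * measure M (cball y (2* s))" using r0(3)[of "2* s"] s r0 by simp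
  have "measure M (cball x s) \<le> measure M (cball y (4 * s))"
    by (rule measure_mono_fmeasurable[OF sub2]) auto
  also have "\<dots> \<le> C * measure M (cball y (2* s))" using m3 by simp
  also have "\<dots> \<le> C * (C * measure M (cball y s))" using m2 r0 by simp
  also have "\<dots> \<le> C * (C * (C * measure M (cball y (s/2))))" using m1 r0 by simp
  finally have A: "measure M (cball x s) / C^3 \<le> measure M (cball y (s/2))"
    using r0 by (simp add: divide_le_eq power3_eq_cube mult.commute mult.left_commute)
  have U: "measure M (cball y (s/2) \<union> cball x s) = measure M (cball y (s/2)) + measure M (cball x s)"
    by (rule measure_Union) (use disj ball_fin' in \<open>auto simp: sets_M\<close>)
  have "measure M (cball y (s/2) \<union> cball x s) \<le> measure M (cball x (4 * s))"
    by (rule measure_mono_fmeasurable[OF sub]) (auto simp: sets_M)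
  then have "measure M (cball y (s/2)) + measure M (cball x s) \<le> measure M (cball x (4 * s))" using U by simp
  then show ?thesis using A by (simp add: algebra_simps)
qed

lemma rev_iter:
  assumes r0: "r0 > 0" "C > 0" "\<And>x r. r \<ge> r0 \<Longrightarrow> measure M (cball x (2*r)) \<le> C * measure M (cball x r)"
    and S: "S \<ge> 2*r0" "S \<ge> h'" and z: "\<forall>j<k. \<exists>z. dist x z \<ge> 2 * (4^j * S)"
  shows "(1 + 1/C^3)^k * measure M (cball x S) \<le> measure M (cball x (4^k * S))"
  using z
proof (induction k)
  case 0 then show ?case by simp
next
  case (Suc k)
  have IH: "(1 + 1/C^3)^k * measure M (cball x S) \<le> measure M (cball x (4^k * S))"
    using Suc by auto
  have "(4::real)^k \<ge> 1" by simp
  then have sS: "4^k * S \<ge> S" using S r0 by (simp add: mult_le_cancel_right1)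
  obtain z where "dist x z \<ge> 2 * (4^k * S)" using Suc.prems by auto
  then have st: "(1 + 1/C^3) * measure M (cball x (4^k * S)) \<le> measure M (cball x (4 * (4^k * S)))"
    by (intro rev_step[OF r0]) (use sS S in auto)
  have q: "1 + 1/C^3 \<ge> 0" using r0 by simp
  have "(1 + 1/C^3)^Suc k * measure M (cball x S) = (1 + 1/C^3) * ((1 + 1/C^3)^k * measure M (cball x S))"
    by simp
  also have "\<dots> \<le> (1 + 1/C^3) * measure M (cball x (4^k * S))"
    by (rule mult_left_mono[OF IH q])
  also have "\<dots> \<le> measure M (cball x (4^Suc k * S))" using st by (simp add: mult.assoc)
  finally show ?case .
qed

lemma revdoub:
  obtains R0 K \<epsilon> where "R0 > 0" "K \<ge> 1" "\<epsilon> > 0"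
    "\<And>x S. S \<ge> R0 \<Longrightarrow> ereal S \<le> ereal \<epsilon> * diamM TYPE('a) \<Longrightarrow>
       2 * measure M (cball x S) \<le> measure M (cball x (K * S))"
proof -
  obtain r0 C where r0: "r0 > 0" "C > 0" "\<And>x r. r \<ge> r0 \<Longrightarrow> measure M (cball x (2*r)) \<le> C * measure M (cball x r)"
    by (rule vdi_bounds) blast
  have "1 < 1 + 1/C^3" using r0 by simp
  then obtain k :: nat where k: "2 < (1 + 1/C^3)^k" using real_arch_pow by blast
  define K :: real where "K = 4^k"
  define \<epsilon> where "\<epsilon> = 1 / (5 * K)"
  have K1: "K \<ge> 1" unfolding K_def by simp
  have ep: "\<epsilon> > 0" unfolding \<epsilon>_def using K1 by simp
  have main: "2 * measure M (cball x S) \<le> measure M (cball x (K * S))"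
    if S: "S \<ge> max (2*r0) h'" and d: "ereal S \<le> ereal \<epsilon> * diamM TYPE('a)" for x S
  proof -
    have Spos: "S > 0" using S r0 by simp
    have "\<exists>u v::'a. dist u v > 4 * K * S"
    proof (rule ccontr)
      assume "\<not> ?thesis"
      then have "\<forall>u v::'a. dist u v \<le> 4 * K * S" by (simp add: not_less)
      then have "diamM TYPE('a) \<le> ereal (4 * K * S)" unfolding diamM_def by (auto intro!: SUP_least)
      then have "ereal \<epsilon> * diamM TYPE('a) \<le> ereal \<epsilon> * ereal (4 * K * S)"
        using ep by (intro ereal_mult_left_mono) auto
      also have "\<dots> = ereal (4/5 * S)" unfolding \<epsilon>_def using K1 by simp
      finally have e: "ereal \<epsilon> * diamM TYPE('a) \<le> ereal (4/5 * S)" .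
      have "ereal S \<le> ereal (4/5 * S)" using d e by (rule order_trans)
      then have "S \<le> 4/5 * S" by simp
      then show False using Spos by simp
    qed
    then obtain u v :: 'a where uv: "dist u v > 4 * K * S" by blast
    have z: "\<forall>j<k. \<exists>z. dist x z \<ge> 2 * (4^j * S)"
    proof safe
      fix j assume "j < k"
      then have "(4::real)^j \<le> K" unfolding K_def by (simp add: power_increasing)
      then have "4 * (4^j * S) \<le> 4 * K * S" using Spos by simp
      then have sum: "dist x u + dist x v > 4 * (4^j * S)" using uv dist_triangle[of u v x] by (simp add: dist_commute)
      show "\<exists>z. dist x z \<ge> 2 * (4^j * S)"
      proof (cases "dist x u \<ge> 2 * (4^j * S)")
        case True then show ?thesis by blast
      next
        case False then have "dist x v \<ge> 2 * (4^j * S)" using sum by linarith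
        then show ?thesis by blast
      qed
    qed
    have "(1 + 1/C^3)^k * measure M (cball x S) \<le> measure M (cball x (4^k * S))"
      by (rule rev_iter[OF r0 _ _ z]) (use S in auto)
    moreover have "2 * measure M (cball x S) \<le> (1 + 1/C^3)^k * measure M (cball x S)"
      using k by (intro mult_right_mono) auto
    ultimately show ?thesis unfolding K_def by simp
  qed
  show thesis
    by (rule that[of "max (2*r0) h'" K \<epsilon>]) (use r0 K1 ep main in auto)
qed

end

context setting begin

lemma sq_le_2dev:
  assumes g[measurable]: "g \<in> borel_measurable M" and supp: "\<And>y. y \<notin> cball x r \<Longrightarrow> g y = 0"
    and sub: "cball x r \<subseteq> cball x R" and dbl: "2 * measure M (cball x r) \<le> measure M (cball x R)"
  shows "(\<integral>\<^sup>+y. ennreal ((g y)^2) \<partial>M) \<le> 2 * (\<integral>\<^sup>+y. indicator (cball x R) y * ennreal ((g y - a)^2) \<partial>M)"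
proof -
  let ?Br = "cball x r" and ?BR = "cball x R"
  let ?D = "?BR - ?Br"
  have mBr[measurable]: "?Br \<in> sets M" and mBR[measurable]: "?BR \<in> sets M" by (auto simp: sets_M)
  have mD[measurable]: "?D \<in> sets M" by (auto simp: sets_M)
  have gb: "g \<in> borel_measurable borel" using g measurable_cong_sets[OF sets_M refl] by auto
  have "(\<integral>\<^sup>+y. ennreal ((g y)^2) \<partial>M) = (\<integral>\<^sup>+y. indicator ?Br y * ennreal ((g y)^2) \<partial>M)"
    by (intro nn_integral_cong) (auto simp: supp indicator_def)
  also have "\<dots> \<le> (\<integral>\<^sup>+y. 2 * (indicator ?Br y * ennreal ((g y - a)^2)) + ennreal (2*a^2) * indicator ?Br y \<partial>M)"
  proof (intro nn_integral_mono)
    fix y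
    have e: "2 * (g y - a)^2 + 2*a^2 - (g y)^2 = (g y - 2*a)^2" by (simp add: power2_eq_square algebra_simps)
    have "0 \<le> (g y - 2*a)^2" by simp
    then have "(g y)^2 \<le> 2 * (g y - a)^2 + 2*a^2" using e by linarith
    then have "ennreal ((g y)^2) \<le> ennreal (2 * (g y - a)^2 + 2*a^2)" by (rule ennreal_leI)
    also have "\<dots> = 2 * ennreal ((g y - a)^2) + ennreal (2*a^2)"
      by (simp add: ennreal_plus ennreal_mult)
    finally have "ennreal ((g y)^2) \<le> 2 * ennreal ((g y - a)^2) + ennreal (2*a^2)" .
    then show "indicator ?Br y * ennreal ((g y)^2) \<le> 2 * (indicator ?Br y * ennreal ((g y - a)^2)) + ennreal (2*a^2) * indicator ?Br y"
      by (auto simp: indicator_def)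
  qed
  also have "\<dots> = 2 * (\<integral>\<^sup>+y. indicator ?Br y * ennreal ((g y - a)^2) \<partial>M) + ennreal (2*a^2) * emeasure M ?Br"
    by (simp add: nn_integral_add nn_integral_cmult)
  also have "ennreal (2*a^2) * emeasure M ?Br \<le> 2 * (\<integral>\<^sup>+y. indicator ?D y * ennreal ((g y - a)^2) \<partial>M)"
  proof -
    have "measure M ?D = measure M ?BR - measure M ?Br"
      by (rule measure_Diff) (use sub in \<open>auto simp: sets_M ball_fin'\<close>)
    then have "measure M ?Br \<le> measure M ?D" using dbl by simp
    then have "emeasure M ?Br \<le> emeasure M ?D"
    proof -
      have "emeasure M ?D \<le> emeasure M ?BR" by (rule emeasure_mono) (auto simp: sets_M)
      then have "emeasure M ?D \<noteq> top" using ball_fin'[of x R] by (auto simp: top_unique)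
      then have "emeasure M ?D = ennreal (measure M ?D)" by (rule emeasure_eq_ennreal_measure)
      then show ?thesis using emeasure_ball[of x r] \<open>measure M ?Br \<le> measure M ?D\<close> by (simp add: ennreal_leI)
    qed
    then have "ennreal (2*a^2) * emeasure M ?Br \<le> ennreal (2*a^2) * emeasure M ?D" by (rule mult_left_mono) simp
    also have "\<dots> = 2 * (ennreal (a^2) * emeasure M ?D)" by (simp add: ennreal_mult' mult.assoc)
    also have "ennreal (a^2) * emeasure M ?D = (\<integral>\<^sup>+y. ennreal (a^2) * indicator ?D y \<partial>M)"
      by (simp add: nn_integral_cmult)
    also have "\<dots> = (\<integral>\<^sup>+y. indicator ?D y * ennreal ((g y - a)^2) \<partial>M)"
      by (intro nn_integral_cong) (auto simp: supp indicator_def)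
    finally show ?thesis .
  qed
  also have "2 * (\<integral>\<^sup>+y. indicator ?Br y * ennreal ((g y - a)^2) \<partial>M) + 2 * (\<integral>\<^sup>+y. indicator ?D y * ennreal ((g y - a)^2) \<partial>M)
      = 2 * (\<integral>\<^sup>+y. indicator ?BR y * ennreal ((g y - a)^2) \<partial>M)"
  proof -
    have "(\<integral>\<^sup>+y. indicator ?Br y * ennreal ((g y - a)^2) \<partial>M) + (\<integral>\<^sup>+y. indicator ?D y * ennreal ((g y - a)^2) \<partial>M)
       = (\<integral>\<^sup>+y. indicator ?Br y * ennreal ((g y - a)^2) + indicator ?D y * ennreal ((g y - a)^2) \<partial>M)"
      by (simp add: nn_integral_add)
    also have "\<dots> = (\<integral>\<^sup>+y. indicator ?BR y * ennreal ((g y - a)^2) \<partial>M)"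
      by (intro nn_integral_cong) (use sub in \<open>auto simp: indicator_def\<close>)
    finally show ?thesis by (simp add: distrib_left[symmetric])
  qed
  finally show ?thesis by (simp add: add_mono)
qed

lemma poinc_bounds:
  obtains C1P C2 r0P where "C1P > 0" "C2 \<ge> 1" "r0P > 0"
    "\<And>f x r. L_infty_loc M f \<Longrightarrow> r \<ge> r0P \<Longrightarrow>
     (\<integral>\<^sup>+ y. indicator (cball x r) y * ennreal ((f y - ball_avg M f (cball x r))^2) \<partial>M)
       \<le> ennreal (C1P * r^2) * (\<integral>\<^sup>+ y. indicator (cball x (C2*r)) y * grad_sq M h f y \<partial>M)"
proof -
  from poinc obtain C1P C2 r0P where "C1P > 0" "C2 \<ge> 1" "r0P > 0" "\<forall>f x r. L_infty_loc M f \<longrightarrow> r \<ge> r0P \<longrightarrow>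
     (\<integral>\<^sup>+ y. indicator (cball x r) y * ennreal ((f y - ball_avg M f (cball x r))^2) \<partial>M)
       \<le> ennreal (C1P * r^2) * (\<integral>\<^sup>+ y. indicator (cball x (C2*r)) y * grad_sq M h f y \<partial>M)"
    unfolding poincare_h_def by blast
  then show thesis using that by blast
qed

lemma grad_mono:
  assumes "\<And>z. \<bar>f z - f y\<bar> \<le> \<bar>g z - g y\<bar>"
  shows "grad_sq M h f y \<le> grad_sq M h g y"
  unfolding grad_sq_def
proof (intro divide_right_mono_ennreal nn_integral_mono)
  fix z
  have "(f z - f y)^2 \<le> (g z - g y)^2" using assms[of z] by (simp add: abs_le_square_iff)
  then show "indicator (cball y h) z * ennreal ((f z - f y)^2) \<le> indicator (cball y h) z * ennreal ((g z - g y)^2)"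
    by (intro mult_left_mono ennreal_leI) auto
qed

lemma clamp_abs: "(n::real) \<ge> 0 \<Longrightarrow> \<bar>max (-n) (min n t)\<bar> = min n \<bar>t\<bar>"
  by (cases "t \<ge> 0") (auto simp: max_def min_def)

lemma clamp_lip: "\<bar>max (-n) (min n t) - max (-n) (min n s)\<bar> \<le> \<bar>t - (s::real)\<bar>"
  by (auto simp: max_def min_def abs_if)

lemma poinc_cons:
  assumes C1P: "C1P > 0" and PI: "\<And>f x r. L_infty_loc M f \<Longrightarrow> r \<ge> r0P \<Longrightarrow>
     (\<integral>\<^sup>+ y. indicator (cball x r) y * ennreal ((f y - ball_avg M f (cball x r))^2) \<partial>M)
       \<le> ennreal (C1P * r^2) * (\<integral>\<^sup>+ y. indicator (cball x (C2*r)) y * grad_sq M h f y \<partial>M)"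
    and g[measurable]: "g \<in> borel_measurable M" and supp: "\<And>y. y \<notin> cball x r \<Longrightarrow> g y = 0"
    and sub: "cball x r \<subseteq> cball x R" and dbl: "2 * measure M (cball x r) \<le> measure M (cball x R)"
    and R: "R \<ge> r0P"
  shows "(\<integral>\<^sup>+y. ennreal ((g y)^2) \<partial>M) \<le> ennreal (2 * C1P * R^2) * (\<integral>\<^sup>+y. grad_sq M h g y \<partial>M)"
proof -
  define gn where "gn n y = max (- real n) (min (real n) (g y))" for n :: nat and y
  have gnm[measurable]: "gn n \<in> borel_measurable M" for n unfolding gn_def by measurable
  have bound: "(\<integral>\<^sup>+y. ennreal ((gn n y)^2) \<partial>M) \<le> ennreal (2 * C1P * R^2) * (\<integral>\<^sup>+y. grad_sq M h g y \<partial>M)" for n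
  proof -
    let ?a = "ball_avg M (gn n) (cball x R)"
    have L: "L_infty_loc M (gn n)"
      unfolding L_infty_loc_def
    proof (intro conjI gnm allI impI exI)
      fix K :: "'a set"
      show "AE y in M. y \<in> K \<longrightarrow> \<bar>gn n y\<bar> \<le> real n" by (auto simp: gn_def clamp_abs)
    qed
    have "(\<integral>\<^sup>+y. ennreal ((gn n y)^2) \<partial>M) \<le> 2 * (\<integral>\<^sup>+y. indicator (cball x R) y * ennreal ((gn n y - ?a)^2) \<partial>M)"
      by (rule sq_le_2dev[OF gnm _ sub dbl]) (auto simp: gn_def supp)
    also have "\<dots> \<le> 2 * (ennreal (C1P * R^2) * (\<integral>\<^sup>+ y. indicator (cball x (C2*R)) y * grad_sq M h (gn n) y \<partial>M))"
      by (intro mult_left_mono PI[OF L R]) simp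
    also have "(\<integral>\<^sup>+ y. indicator (cball x (C2*R)) y * grad_sq M h (gn n) y \<partial>M) \<le> (\<integral>\<^sup>+y. grad_sq M h g y \<partial>M)"
    proof (intro nn_integral_mono)
      fix y
      have "grad_sq M h (gn n) y \<le> grad_sq M h g y" by (rule grad_mono) (simp add: gn_def clamp_lip)
      then show "indicator (cball x (C2*R)) y * grad_sq M h (gn n) y \<le> grad_sq M h g y"
        by (auto simp: indicator_def)
    qed
    finally have X: "(\<integral>\<^sup>+y. ennreal ((gn n y)^2) \<partial>M) \<le> 2 * (ennreal (C1P * R^2) * (\<integral>\<^sup>+y. grad_sq M h g y \<partial>M))"
      by (simp add: mult_left_mono)
    have e: "ennreal (2 * C1P * R^2) = 2 * ennreal (C1P * R^2)"
      using C1P by (simp add: ennreal_mult mult.assoc)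
    show ?thesis unfolding e using X by (simp add: mult.assoc)
  qed
  define F where "F n y = ennreal ((gn n y)^2)" for n y
  have inc: "incseq F"
  proof (rule incseq_SucI, rule le_funI)
    fix n y
    have "\<bar>gn n y\<bar> \<le> \<bar>gn (Suc n) y\<bar>" by (simp add: gn_def clamp_abs)
    then show "F n y \<le> F (Suc n) y" unfolding F_def by (intro ennreal_leI) (simp add: abs_le_square_iff)
  qed
  have sup: "(SUP n. F n y) = ennreal ((g y)^2)" for y
  proof (rule antisym)
    show "(SUP n. F n y) \<le> ennreal ((g y)^2)"
    proof (rule SUP_least)
      fix n
      have "\<bar>gn n y\<bar> \<le> \<bar>g y\<bar>" by (simp add: gn_def clamp_abs)
      then show "F n y \<le> ennreal ((g y)^2)" unfolding F_def by (intro ennreal_leI) (simp add: abs_le_square_iff)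
    qed
    obtain n :: nat where "\<bar>g y\<bar> \<le> real n" using real_nat_ceiling_ge by blast
    then have "gn n y = g y" unfolding gn_def by (cases "g y < 0") (auto simp: max_def min_def)
    then show "ennreal ((g y)^2) \<le> (SUP n. F n y)" unfolding F_def by (intro SUP_upper2[of n]) auto
  qed
  have "(\<integral>\<^sup>+y. ennreal ((g y)^2) \<partial>M) = (\<integral>\<^sup>+y. (SUP n. F n y) \<partial>M)" by (simp add: sup)
  also have "\<dots> = (SUP n. \<integral>\<^sup>+y. F n y \<partial>M)"
    by (rule nn_integral_monotone_convergence_SUP[OF inc]) (unfold F_def, measurable)
  also have "\<dots> \<le> ennreal (2 * C1P * R^2) * (\<integral>\<^sup>+y. grad_sq M h g y \<partial>M)"
    by (rule SUP_least) (simp add: F_def bound)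
  finally show ?thesis .
qed

end

context setting begin

lemma p_comp[measurable (raw)]:
  assumes "f \<in> measurable N M" "g \<in> measurable N M"
  shows "(\<lambda>w. p (f w) (g w)) \<in> borel_measurable N"
  using measurable_compose[OF measurable_Pair[OF assms] p_meas] by simp


lemma swap:
  assumes "(\<lambda>(x,y). F x y) \<in> borel_measurable (M \<Otimes>\<^sub>M M)"
  shows "(\<integral>\<^sup>+x. \<integral>\<^sup>+y. F x y \<partial>M \<partial>M) = (\<integral>\<^sup>+y. \<integral>\<^sup>+x. F x y \<partial>M \<partial>M)"
  using PP.Fubini[OF assms] by simp

lemma iter_prod:
  assumes "(\<lambda>(x,y). F x y) \<in> borel_measurable (M \<Otimes>\<^sub>M M)"
  shows "(\<integral>\<^sup>+x. \<integral>\<^sup>+y. F x y \<partial>M \<partial>M) = (\<integral>\<^sup>+z. F (fst z) (snd z) \<partial>(M \<Otimes>\<^sub>M M))"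
  using nn_integral_fst[OF assms] by (simp add: case_prod_beta')

lemma sym_AE: "AE z in M \<Otimes>\<^sub>M M. p (fst z) (snd z) = p (snd z) (fst z)"
  using compat unfolding compatible_def by blast

lemma SYM:
  assumes H[measurable]: "(\<lambda>(x,y). H x y) \<in> borel_measurable (M \<Otimes>\<^sub>M M)"
  shows "(\<integral>\<^sup>+x. \<integral>\<^sup>+y. ennreal (p x y) * H x y \<partial>M \<partial>M) = (\<integral>\<^sup>+x. \<integral>\<^sup>+y. ennreal (p y x) * H x y \<partial>M \<partial>M)"
proof -
  have H'[measurable]: "(\<lambda>z. H (fst z) (snd z)) \<in> borel_measurable (M \<Otimes>\<^sub>M M)"
    using H by (simp add: case_prod_beta')
  have "(\<integral>\<^sup>+x. \<integral>\<^sup>+y. ennreal (p x y) * H x y \<partial>M \<partial>M) = (\<integral>\<^sup>+z. ennreal (p (fst z) (snd z)) * H (fst z) (snd z) \<partial>(M \<Otimes>\<^sub>M M))"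
    by (rule iter_prod) measurable
  also have "\<dots> = (\<integral>\<^sup>+z. ennreal (p (snd z) (fst z)) * H (fst z) (snd z) \<partial>(M \<Otimes>\<^sub>M M))"
    by (rule nn_integral_cong_AE) (use sym_AE in \<open>eventually_elim, simp\<close>)
  also have "\<dots> = (\<integral>\<^sup>+x. \<integral>\<^sup>+y. ennreal (p y x) * H x y \<partial>M \<partial>M)"
    by (rule iter_prod[symmetric]) measurable
  finally show ?thesis .
qed

end

context setting begin
lemma grad_eq: "grad_sq M h g x = (\<integral>\<^sup>+ y. indicator (cball x h) y * ennreal ((g y - g x)^2) \<partial>M) * ennreal (1 / measure M (cball x h))"
proof -
  have mu: "measure M (cball x h) > 0" using ball_pos hpos by simp
  have v: "V M x h = ennreal (measure M (cball x h))" unfolding V_def by (rule emeasure_ball)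
  have i: "inverse (ennreal (measure M (cball x h))) = ennreal (inverse (measure M (cball x h)))" by (rule inverse_ennreal[OF mu])
  have j: "inverse (measure M (cball x h)) = 1 / measure M (cball x h)" by (rule inverse_eq_divide)
  have "grad_sq M h g x = (\<integral>\<^sup>+ y. indicator (cball x h) y * ennreal ((g y - g x)^2) \<partial>M) / V M x h"
      unfolding grad_sq_def by (rule refl)
  also have "\<dots> = (\<integral>\<^sup>+ y. indicator (cball x h) y * ennreal ((g y - g x)^2) \<partial>M) * inverse (ennreal (measure M (cball x h)))"
    unfolding v by (rule divide_ennreal_def)
  finally show ?thesis unfolding i j .
qed
end

context setting begin

lemma cball_sets_borel[measurable]: "cball x r \<in> sets borel" by (simp add: borel_closed)
lemma cball_sets_M[measurable]: "cball x r \<in> sets M" by (simp add: borel_closed sets_M)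

lemma grad_le_p:
  assumes g[measurable]: "g \<in> borel_measurable M" and c1: "c1 > 0" and low: "\<And>w. AE y in M. c1 / measure M (cball w h) * indicator (cball w h) y \<le> p w y"
  shows "grad_sq M h g x \<le> (\<integral>\<^sup>+y. ennreal (1/c1 * (p x y * (g y - g x)^2)) \<partial>M)"
proof -
  have mu: "measure M (cball x h) > 0" using ball_pos hpos by simp
  have "grad_sq M h g x = (\<integral>\<^sup>+ y. indicator (cball x h) y * ennreal ((g y - g x)^2) \<partial>M) * ennreal (1/measure M (cball x h))"
    by (rule grad_eq)
  also have "\<dots> = (\<integral>\<^sup>+ y. indicator (cball x h) y * ennreal ((g y - g x)^2) * ennreal (1/measure M (cball x h)) \<partial>M)"
    by (rule nn_integral_multc[symmetric]) measurable
  also have "\<dots> \<le> (\<integral>\<^sup>+y. ennreal (1/c1 * (p x y * (g y - g x)^2)) \<partial>M)"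
  proof (rule nn_integral_mono_AE)
    show "AE y in M. indicator (cball x h) y * ennreal ((g y - g x)^2) * ennreal (1/measure M (cball x h)) \<le> ennreal (1/c1 * (p x y * (g y - g x)^2))"
      using low[of x]
    proof eventually_elim
      case (elim y)
      show ?case
      proof (cases "y \<in> cball x h")
        case True
        then have "c1 / measure M (cball x h) \<le> p x y" using elim by simp
        then have "1 / measure M (cball x h) \<le> 1/c1 * p x y" using c1 mu by (simp add: field_simps)
        then have X: "(g y - g x)^2 * (1/measure M (cball x h)) \<le> (g y - g x)^2 * (1/c1 * p x y)"
          by (rule mult_left_mono) simp
        then have "(g y - g x)^2 * (1/measure M (cball x h)) \<le> 1/c1 * (p x y * (g y - g x)^2)"
          by (simp add: mult_ac)
        moreover have "ennreal ((g y - g x)^2) * ennreal (1/measure M (cball x h)) = ennreal ((g y - g x)^2 * (1/measure M (cball x h)))"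
          by (rule ennreal_mult[symmetric]) (use mu in auto)
        ultimately show ?thesis using True by (simp add: ennreal_leI)
      qed simp
    qed
  qed
  finally show ?thesis .
qed

lemma p2_le: "ennreal (p2 M p x y) \<le> (\<integral>\<^sup>+z. ennreal (p x z * p y z) \<partial>M)"
proof (cases "integrable M (\<lambda>z. p x z * p y z)")
  case True
  then have "(\<integral>\<^sup>+z. ennreal (p x z * p y z) \<partial>M) = ennreal (p2 M p x y)"
    unfolding p2_def by (rule nn_integral_eq_integral) (simp add: p_nonneg)
  then show ?thesis by simp
next
  case False
  then show ?thesis unfolding p2_def by (simp add: not_integrable_integral_eq)
qed

lemma alpha_bound:
  obtains \<alpha> where "\<alpha> > 0" "AE z in M \<Otimes>\<^sub>M M. \<alpha> * p (fst z) (snd z) \<le> p2 M p (fst z) (snd z)"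
  using compat unfolding compatible_def by blast

lemma E2:
  assumes g[measurable]: "g \<in> borel_measurable M" and al: "\<alpha> > 0"
    and A: "AE z in M \<Otimes>\<^sub>M M. \<alpha> * p (fst z) (snd z) \<le> p2 M p (fst z) (snd z)"
  shows "(\<integral>\<^sup>+x. \<integral>\<^sup>+y. ennreal (p x y) * ennreal ((g y - g x)^2) \<partial>M \<partial>M)
     \<le> ennreal (1/\<alpha>) * (\<integral>\<^sup>+x. \<integral>\<^sup>+y. \<integral>\<^sup>+z. ennreal (p x z) * ennreal (p y z) * ennreal ((g y - g x)^2) \<partial>M \<partial>M \<partial>M)"
proof -
  have "(\<integral>\<^sup>+x. \<integral>\<^sup>+y. ennreal (p x y) * ennreal ((g y - g x)^2) \<partial>M \<partial>M)
      = (\<integral>\<^sup>+w. ennreal (p (fst w) (snd w)) * ennreal ((g (snd w) - g (fst w))^2) \<partial>(M \<Otimes>\<^sub>M M))"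
    by (rule iter_prod) measurable
  also have "\<dots> \<le> (\<integral>\<^sup>+w. ennreal (1/\<alpha>) * (\<integral>\<^sup>+z. ennreal (p (fst w) z) * ennreal (p (snd w) z) * ennreal ((g (snd w) - g (fst w))^2) \<partial>M) \<partial>(M \<Otimes>\<^sub>M M))"
  proof (rule nn_integral_mono_AE)
    show "AE w in M \<Otimes>\<^sub>M M. ennreal (p (fst w) (snd w)) * ennreal ((g (snd w) - g (fst w))^2)
       \<le> ennreal (1/\<alpha>) * (\<integral>\<^sup>+z. ennreal (p (fst w) z) * ennreal (p (snd w) z) * ennreal ((g (snd w) - g (fst w))^2) \<partial>M)"
      using A
    proof eventually_elim
      case (elim w)
      define a where "a = fst w"
      define b where "b = snd w"
      define G where "G = (g b - g a)^2"
      have G0: "G \<ge> 0" unfolding G_def by simp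
      have pab: "p a b \<le> 1/\<alpha> * p2 M p a b" using elim al unfolding a_def b_def by (simp add: field_simps)
      have p20: "p2 M p a b \<ge> 0" unfolding p2_def by (rule integral_nonneg_AE) (simp add: p_nonneg)
      have "ennreal (p a b) \<le> ennreal (1/\<alpha> * p2 M p a b)" using pab by (rule ennreal_leI)
      also have "\<dots> = ennreal (1/\<alpha>) * ennreal (p2 M p a b)" by (rule ennreal_mult) (use al p20 in auto)
      also have "\<dots> \<le> ennreal (1/\<alpha>) * (\<integral>\<^sup>+z. ennreal (p a z * p b z) \<partial>M)"
        by (intro mult_left_mono p2_le) simp
      finally have "ennreal (p a b) * ennreal G \<le> ennreal (1/\<alpha>) * (\<integral>\<^sup>+z. ennreal (p a z * p b z) \<partial>M) * ennreal G"
        by (rule mult_right_mono) simp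
      also have "\<dots> = ennreal (1/\<alpha>) * (\<integral>\<^sup>+z. ennreal (p a z * p b z) * ennreal G \<partial>M)"
        by (simp add: nn_integral_multc mult.assoc)
      also have "\<dots> = ennreal (1/\<alpha>) * (\<integral>\<^sup>+z. ennreal (p a z) * ennreal (p b z) * ennreal G \<partial>M)"
        by (simp add: ennreal_mult p_nonneg)
      finally show ?case unfolding a_def b_def G_def .
    qed
  qed
  also have "\<dots> = ennreal (1/\<alpha>) * (\<integral>\<^sup>+w. (\<integral>\<^sup>+z. ennreal (p (fst w) z) * ennreal (p (snd w) z) * ennreal ((g (snd w) - g (fst w))^2) \<partial>M) \<partial>(M \<Otimes>\<^sub>M M))"
    by (rule nn_integral_cmult) measurable
  also have "(\<integral>\<^sup>+w. (\<integral>\<^sup>+z. ennreal (p (fst w) z) * ennreal (p (snd w) z) * ennreal ((g (snd w) - g (fst w))^2) \<partial>M) \<partial>(M \<Otimes>\<^sub>M M))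
     = (\<integral>\<^sup>+x. \<integral>\<^sup>+y. \<integral>\<^sup>+z. ennreal (p x z) * ennreal (p y z) * ennreal ((g y - g x)^2) \<partial>M \<partial>M \<partial>M)"
    by (rule iter_prod[symmetric]) measurable
  finally show ?thesis .
qed

end

context setting begin

lemma triple:
  assumes F[measurable]: "(\<lambda>u. F (fst (fst u)) (snd (fst u)) (snd u)) \<in> borel_measurable ((M \<Otimes>\<^sub>M M) \<Otimes>\<^sub>M M)"
  shows "(\<integral>\<^sup>+x. \<integral>\<^sup>+y. \<integral>\<^sup>+z. F x y z \<partial>M \<partial>M \<partial>M) = (\<integral>\<^sup>+u. F (fst (fst u)) (snd (fst u)) (snd u) \<partial>((M \<Otimes>\<^sub>M M) \<Otimes>\<^sub>M M))"
proof -
  have m2: "(\<lambda>(x, y). \<integral>\<^sup>+z. F x y z \<partial>M) \<in> borel_measurable (M \<Otimes>\<^sub>M M)"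
  proof -
    have "(\<lambda>w. \<integral>\<^sup>+z. (\<lambda>u. F (fst (fst u)) (snd (fst u)) (snd u)) (w, z) \<partial>M) \<in> borel_measurable (M \<Otimes>\<^sub>M M)"
      by (rule borel_measurable_nn_integral_fst[OF F])
    then show ?thesis by (simp add: case_prod_beta')
  qed
  have "(\<integral>\<^sup>+x. \<integral>\<^sup>+y. \<integral>\<^sup>+z. F x y z \<partial>M \<partial>M \<partial>M) = (\<integral>\<^sup>+w. \<integral>\<^sup>+z. F (fst w) (snd w) z \<partial>M \<partial>(M \<Otimes>\<^sub>M M))"
    by (rule iter_prod[OF m2])
  also have "\<dots> = (\<integral>\<^sup>+u. F (fst (fst u)) (snd (fst u)) (snd u) \<partial>((M \<Otimes>\<^sub>M M) \<Otimes>\<^sub>M M))"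
    using nn_integral_fst[OF F] by simp
  finally show ?thesis .
qed

lemma sq_split: "((v::real) - u)^2 \<le> 2 * (u - w)^2 + 2 * (v - w)^2"
proof -
  have "2 * (u - w)^2 + 2 * (v - w)^2 - (v - u)^2 = (u + v - 2*w)^2" by (simp add: power2_eq_square algebra_simps)
  moreover have "(u + v - 2*w)^2 \<ge> 0" by simp
  ultimately show ?thesis by linarith
qed

lemma E3a:
  assumes g[measurable]: "g \<in> borel_measurable M" and m[measurable]: "m \<in> borel_measurable M"
  shows "(\<integral>\<^sup>+x. \<integral>\<^sup>+y. \<integral>\<^sup>+z. ennreal (p x z) * ennreal (p y z) * ennreal ((g y - g x)^2) \<partial>M \<partial>M \<partial>M)
    \<le> 2 * (\<integral>\<^sup>+x. \<integral>\<^sup>+y. \<integral>\<^sup>+z. ennreal (p x z) * ennreal (p y z) * ennreal ((g x - m z)^2) \<partial>M \<partial>M \<partial>M)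
     + 2 * (\<integral>\<^sup>+x. \<integral>\<^sup>+y. \<integral>\<^sup>+z. ennreal (p x z) * ennreal (p y z) * ennreal ((g y - m z)^2) \<partial>M \<partial>M \<partial>M)"
proof -
  let ?T = "(M \<Otimes>\<^sub>M M) \<Otimes>\<^sub>M M"
  have "(\<integral>\<^sup>+x. \<integral>\<^sup>+y. \<integral>\<^sup>+z. ennreal (p x z) * ennreal (p y z) * ennreal ((g y - g x)^2) \<partial>M \<partial>M \<partial>M)
     \<le> (\<integral>\<^sup>+x. \<integral>\<^sup>+y. \<integral>\<^sup>+z. 2 * (ennreal (p x z) * ennreal (p y z) * ennreal ((g x - m z)^2)) + 2 * (ennreal (p x z) * ennreal (p y z) * ennreal ((g y - m z)^2)) \<partial>M \<partial>M \<partial>M)"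
  proof (intro nn_integral_mono)
    fix x y z
    have "ennreal ((g y - g x)^2) \<le> ennreal (2 * (g x - m z)^2 + 2 * (g y - m z)^2)"
      using sq_split[of "g y" "g x" "m z"] by (rule ennreal_leI)
    also have "\<dots> = 2 * ennreal ((g x - m z)^2) + 2 * ennreal ((g y - m z)^2)"
      by (simp add: ennreal_plus ennreal_mult)
    finally have "ennreal (p x z) * ennreal (p y z) * ennreal ((g y - g x)^2) \<le> ennreal (p x z) * ennreal (p y z) * (2 * ennreal ((g x - m z)^2) + 2 * ennreal ((g y - m z)^2))"
      by (rule mult_left_mono) simp
    then show "ennreal (p x z) * ennreal (p y z) * ennreal ((g y - g x)^2) \<le> 2 * (ennreal (p x z) * ennreal (p y z) * ennreal ((g x - m z)^2)) + 2 * (ennreal (p x z) * ennreal (p y z) * ennreal ((g y - m z)^2))"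
      by (simp add: distrib_left mult_ac)
  qed
  also have "\<dots> = (\<integral>\<^sup>+u. 2 * (ennreal (p (fst (fst u)) (snd u)) * ennreal (p (snd (fst u)) (snd u)) * ennreal ((g (fst (fst u)) - m (snd u))^2))
         + 2 * (ennreal (p (fst (fst u)) (snd u)) * ennreal (p (snd (fst u)) (snd u)) * ennreal ((g (snd (fst u)) - m (snd u))^2)) \<partial>?T)"
    by (rule triple) measurable
  also have "\<dots> = 2 * (\<integral>\<^sup>+u. ennreal (p (fst (fst u)) (snd u)) * ennreal (p (snd (fst u)) (snd u)) * ennreal ((g (fst (fst u)) - m (snd u))^2) \<partial>?T)
         + 2 * (\<integral>\<^sup>+u. ennreal (p (fst (fst u)) (snd u)) * ennreal (p (snd (fst u)) (snd u)) * ennreal ((g (snd (fst u)) - m (snd u))^2) \<partial>?T)"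
    apply (subst nn_integral_add)
      apply measurable
    apply (subst nn_integral_cmult)
     apply measurable
    apply (subst nn_integral_cmult)
     apply measurable
    done
  also have "(\<integral>\<^sup>+u. ennreal (p (fst (fst u)) (snd u)) * ennreal (p (snd (fst u)) (snd u)) * ennreal ((g (fst (fst u)) - m (snd u))^2) \<partial>?T)
      = (\<integral>\<^sup>+x. \<integral>\<^sup>+y. \<integral>\<^sup>+z. ennreal (p x z) * ennreal (p y z) * ennreal ((g x - m z)^2) \<partial>M \<partial>M \<partial>M)"
    by (rule triple[symmetric]) measurable
  also have "(\<integral>\<^sup>+u. ennreal (p (fst (fst u)) (snd u)) * ennreal (p (snd (fst u)) (snd u)) * ennreal ((g (snd (fst u)) - m (snd u))^2) \<partial>?T)
      = (\<integral>\<^sup>+x. \<integral>\<^sup>+y. \<integral>\<^sup>+z. ennreal (p x z) * ennreal (p y z) * ennreal ((g y - m z)^2) \<partial>M \<partial>M \<partial>M)"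
    by (rule triple[symmetric]) measurable
  finally show ?thesis .
qed

lemma E3b:
  assumes g[measurable]: "g \<in> borel_measurable M" and m[measurable]: "m \<in> borel_measurable M"
  shows "(\<integral>\<^sup>+x. \<integral>\<^sup>+y. \<integral>\<^sup>+z. ennreal (p x z) * ennreal (p y z) * ennreal ((g y - m z)^2) \<partial>M \<partial>M \<partial>M)
       = (\<integral>\<^sup>+x. \<integral>\<^sup>+y. \<integral>\<^sup>+z. ennreal (p x z) * ennreal (p y z) * ennreal ((g x - m z)^2) \<partial>M \<partial>M \<partial>M)"
proof -
  define K where "K a b = (\<integral>\<^sup>+z. ennreal (p a z) * ennreal (p b z) * ennreal ((g a - m z)^2) \<partial>M)" for a b
  have Km: "(\<lambda>(x, y). K y x) \<in> borel_measurable (M \<Otimes>\<^sub>M M)" unfolding K_def by measurable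
  have "(\<integral>\<^sup>+x. \<integral>\<^sup>+y. \<integral>\<^sup>+z. ennreal (p x z) * ennreal (p y z) * ennreal ((g y - m z)^2) \<partial>M \<partial>M \<partial>M)
      = (\<integral>\<^sup>+x. \<integral>\<^sup>+y. K y x \<partial>M \<partial>M)" unfolding K_def by (simp add: mult_ac)
  also have "\<dots> = (\<integral>\<^sup>+y. \<integral>\<^sup>+x. K y x \<partial>M \<partial>M)" by (rule swap[OF Km])
  also have "\<dots> = (\<integral>\<^sup>+x. \<integral>\<^sup>+y. \<integral>\<^sup>+z. ennreal (p x z) * ennreal (p y z) * ennreal ((g x - m z)^2) \<partial>M \<partial>M \<partial>M)"
    unfolding K_def by simp
  finally show ?thesis .
qed

lemma E3c:
  assumes g[measurable]: "g \<in> borel_measurable M" and m[measurable]: "m \<in> borel_measurable M"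
  shows "(\<integral>\<^sup>+x. \<integral>\<^sup>+y. \<integral>\<^sup>+z. ennreal (p x z) * ennreal (p y z) * ennreal ((g x - m z)^2) \<partial>M \<partial>M \<partial>M)
       = (\<integral>\<^sup>+z. \<integral>\<^sup>+x. ennreal (p z x) * ennreal ((g x - m z)^2) \<partial>M \<partial>M)"
proof -
  define W where "W z = (\<integral>\<^sup>+x. ennreal (p x z) * ennreal ((g x - m z)^2) \<partial>M)" for z
  have Wm[measurable]: "W \<in> borel_measurable M" unfolding W_def by measurable
  have "(\<integral>\<^sup>+x. \<integral>\<^sup>+y. \<integral>\<^sup>+z. ennreal (p x z) * ennreal (p y z) * ennreal ((g x - m z)^2) \<partial>M \<partial>M \<partial>M)
      = (\<integral>\<^sup>+x. \<integral>\<^sup>+z. \<integral>\<^sup>+y. ennreal (p x z) * ennreal (p y z) * ennreal ((g x - m z)^2) \<partial>M \<partial>M \<partial>M)"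
  proof (rule nn_integral_cong)
    fix x
    show "(\<integral>\<^sup>+y. \<integral>\<^sup>+z. ennreal (p x z) * ennreal (p y z) * ennreal ((g x - m z)^2) \<partial>M \<partial>M)
      = (\<integral>\<^sup>+z. \<integral>\<^sup>+y. ennreal (p x z) * ennreal (p y z) * ennreal ((g x - m z)^2) \<partial>M \<partial>M)"
      by (rule swap) measurable
  qed
  also have "\<dots> = (\<integral>\<^sup>+z. \<integral>\<^sup>+x. \<integral>\<^sup>+y. ennreal (p x z) * ennreal (p y z) * ennreal ((g x - m z)^2) \<partial>M \<partial>M \<partial>M)"
    by (rule swap) measurable
  also have "\<dots> = (\<integral>\<^sup>+z. (\<integral>\<^sup>+y. ennreal (p y z) \<partial>M) * W z \<partial>M)"
  proof (rule nn_integral_cong)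
    fix z
    have "(\<integral>\<^sup>+x. \<integral>\<^sup>+y. ennreal (p x z) * ennreal (p y z) * ennreal ((g x - m z)^2) \<partial>M \<partial>M)
        = (\<integral>\<^sup>+x. (\<integral>\<^sup>+y. ennreal (p y z) \<partial>M) * (ennreal (p x z) * ennreal ((g x - m z)^2)) \<partial>M)"
    proof (rule nn_integral_cong)
      fix x
      have "(\<integral>\<^sup>+y. ennreal (p x z) * ennreal (p y z) * ennreal ((g x - m z)^2) \<partial>M)
          = (\<integral>\<^sup>+y. ennreal (p y z) * (ennreal (p x z) * ennreal ((g x - m z)^2)) \<partial>M)"
        by (simp add: mult_ac)
      also have "\<dots> = (\<integral>\<^sup>+y. ennreal (p y z) \<partial>M) * (ennreal (p x z) * ennreal ((g x - m z)^2))"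
        by (rule nn_integral_multc) measurable
      finally show "(\<integral>\<^sup>+y. ennreal (p x z) * ennreal (p y z) * ennreal ((g x - m z)^2) \<partial>M)
          = (\<integral>\<^sup>+y. ennreal (p y z) \<partial>M) * (ennreal (p x z) * ennreal ((g x - m z)^2))" .
    qed
    also have "\<dots> = (\<integral>\<^sup>+y. ennreal (p y z) \<partial>M) * W z"
      unfolding W_def by (rule nn_integral_cmult) measurable
    finally show "(\<integral>\<^sup>+x. \<integral>\<^sup>+y. ennreal (p x z) * ennreal (p y z) * ennreal ((g x - m z)^2) \<partial>M \<partial>M)
        = (\<integral>\<^sup>+y. ennreal (p y z) \<partial>M) * W z" .
  qed
  also have "\<dots> = (\<integral>\<^sup>+z. \<integral>\<^sup>+y. ennreal (p y z) * W z \<partial>M \<partial>M)"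
    by (intro nn_integral_cong nn_integral_multc[symmetric]) measurable
  also have "\<dots> = (\<integral>\<^sup>+z. \<integral>\<^sup>+y. ennreal (p z y) * W z \<partial>M \<partial>M)"
    by (rule SYM[symmetric]) measurable
  also have "\<dots> = (\<integral>\<^sup>+z. (\<integral>\<^sup>+y. ennreal (p z y) \<partial>M) * W z \<partial>M)"
    by (intro nn_integral_cong nn_integral_multc) measurable
  also have "\<dots> = (\<integral>\<^sup>+z. W z \<partial>M)" by (simp add: p_int1)
  also have "\<dots> = (\<integral>\<^sup>+z. \<integral>\<^sup>+x. ennreal (p x z) * ennreal ((g x - m z)^2) \<partial>M \<partial>M)" unfolding W_def ..
  also have "\<dots> = (\<integral>\<^sup>+z. \<integral>\<^sup>+x. ennreal (p z x) * ennreal ((g x - m z)^2) \<partial>M \<partial>M)"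
    by (rule SYM[symmetric]) measurable
  finally show ?thesis .
qed

end

context setting begin

lemma p_bdd: "\<exists>C. AE y in M. \<bar>p x y\<bar> \<le> C" using mk unfolding markov_kernel_def by blast

lemma variance:
  fixes z :: 'a
  assumes g[measurable]: "g \<in> borel_measurable M" and gfin: "(\<integral>\<^sup>+x. ennreal ((g x)^2) \<partial>M) < \<infinity>"
  defines "mz \<equiv> (\<integral>w. g w * p z w \<partial>M)"
  shows "(\<integral>\<^sup>+x. ennreal (p z x) * ennreal ((g x - mz)^2) \<partial>M) + ennreal (mz^2)
       = (\<integral>\<^sup>+x. ennreal (p z x) * ennreal ((g x)^2) \<partial>M)"
proof -
  have qm[measurable]: "p z \<in> borel_measurable M" by (rule p_meas2)
  have qi: "integrable M (p z)"
    by (rule integrableI_nonneg) (use p_int1[of z] p_nonneg in auto)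
  have q1: "(\<integral>x. p z x \<partial>M) = 1"
    using nn_integral_eq_integral[OF qi] p_int1[of z] p_nonneg by simp
  obtain C where C: "AE y in M. \<bar>p z y\<bar> \<le> C" using p_bdd by blast
  have g2i: "integrable M (\<lambda>x. (g x)^2)"
    by (rule integrableI_nonneg) (use gfin in auto)
  have qg2i: "integrable M (\<lambda>x. p z x * (g x)^2)"
  proof (rule Bochner_Integration.integrable_bound)
    show "integrable M (\<lambda>x. C * (g x)^2)" using g2i by simp
    show "AE x in M. norm (p z x * (g x)^2) \<le> norm (C * (g x)^2)"
      using C
    proof eventually_elim
      case (elim x)
      have "\<bar>p z x\<bar> * (g x)^2 \<le> \<bar>C\<bar> * (g x)^2" using elim by (intro mult_right_mono) auto
      then show ?case by (simp add: abs_mult)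
    qed
  qed measurable
  have qgi: "integrable M (\<lambda>x. p z x * g x)"
  proof (rule Bochner_Integration.integrable_bound)
    show "integrable M (\<lambda>x. p z x + p z x * (g x)^2)" using qi qg2i by simp
    show "AE x in M. norm (p z x * g x) \<le> norm (p z x + p z x * (g x)^2)"
    proof (rule AE_I2)
      fix x
      have q0: "p z x \<ge> 0" by (rule p_nonneg)
      have "\<bar>g x\<bar> \<le> 1 + (g x)^2"
      proof (cases "\<bar>g x\<bar> \<le> 1")
        case True then show ?thesis by (smt (verit) zero_le_power2)
      next
        case False then have "1 \<le> \<bar>g x\<bar>" by simp
        then have "\<bar>g x\<bar> * 1 \<le> \<bar>g x\<bar> * \<bar>g x\<bar>" by (intro mult_left_mono) auto
        moreover have "\<bar>g x\<bar> * \<bar>g x\<bar> = (g x)^2" by (simp add: power2_eq_square abs_mult[symmetric])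
        ultimately show ?thesis by simp
      qed
      then have "p z x * \<bar>g x\<bar> \<le> p z x * (1 + (g x)^2)" by (intro mult_left_mono) (auto simp: q0)
      moreover have "p z x + p z x * (g x)^2 \<ge> 0" using q0 by simp
      ultimately show "norm (p z x * g x) \<le> norm (p z x + p z x * (g x)^2)"
        using q0 by (simp add: abs_mult distrib_left)
    qed
  qed measurable
  have mz': "mz = (\<integral>x. p z x * g x \<partial>M)" unfolding mz_def by (simp add: mult.commute)
  have eqp: "p z x * (g x - mz)^2 = p z x * (g x)^2 - 2 * mz * (p z x * g x) + mz^2 * p z x" for x
    by (simp add: power2_eq_square algebra_simps)
  have vi: "integrable M (\<lambda>x. p z x * (g x - mz)^2)"
    unfolding eqp using qi qgi qg2i by simp
  have "(\<integral>x. p z x * (g x - mz)^2 \<partial>M) = (\<integral>x. p z x * (g x)^2 \<partial>M) - 2 * mz * mz + mz^2 * 1"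
    unfolding eqp using qi qgi qg2i q1 mz' by simp
  then have vint: "(\<integral>x. p z x * (g x - mz)^2 \<partial>M) = (\<integral>x. p z x * (g x)^2 \<partial>M) - mz^2"
    by (simp add: power2_eq_square)
  have v0: "(\<integral>x. p z x * (g x - mz)^2 \<partial>M) \<ge> 0"
    by (rule integral_nonneg_AE) (simp add: p_nonneg)
  have "(\<integral>\<^sup>+x. ennreal (p z x) * ennreal ((g x - mz)^2) \<partial>M) = (\<integral>\<^sup>+x. ennreal (p z x * (g x - mz)^2) \<partial>M)"
    by (simp add: ennreal_mult p_nonneg)
  also have "\<dots> = ennreal (\<integral>x. p z x * (g x - mz)^2 \<partial>M)"
    by (rule nn_integral_eq_integral[OF vi]) (simp add: p_nonneg)
  finally have A: "(\<integral>\<^sup>+x. ennreal (p z x) * ennreal ((g x - mz)^2) \<partial>M) = ennreal ((\<integral>x. p z x * (g x)^2 \<partial>M) - mz^2)"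
    using vint by simp
  have "(\<integral>\<^sup>+x. ennreal (p z x) * ennreal ((g x)^2) \<partial>M) = (\<integral>\<^sup>+x. ennreal (p z x * (g x)^2) \<partial>M)"
    by (simp add: ennreal_mult p_nonneg)
  also have "\<dots> = ennreal (\<integral>x. p z x * (g x)^2 \<partial>M)"
    by (rule nn_integral_eq_integral[OF qg2i]) (simp add: p_nonneg)
  finally have B: "(\<integral>\<^sup>+x. ennreal (p z x) * ennreal ((g x)^2) \<partial>M) = ennreal (\<integral>x. p z x * (g x)^2 \<partial>M)" .
  show ?thesis unfolding A B using v0 vint by (simp add: ennreal_plus[symmetric] del: ennreal_plus)
qed

end

context setting begin

lemma mass:
  assumes g[measurable]: "g \<in> borel_measurable M"
  shows "(\<integral>\<^sup>+z. \<integral>\<^sup>+x. ennreal (p z x) * ennreal ((g x)^2) \<partial>M \<partial>M) = (\<integral>\<^sup>+x. ennreal ((g x)^2) \<partial>M)"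
proof -
  have "(\<integral>\<^sup>+z. \<integral>\<^sup>+x. ennreal (p z x) * ennreal ((g x)^2) \<partial>M \<partial>M) = (\<integral>\<^sup>+z. \<integral>\<^sup>+x. ennreal (p x z) * ennreal ((g x)^2) \<partial>M \<partial>M)"
    by (rule SYM) measurable
  also have "\<dots> = (\<integral>\<^sup>+x. \<integral>\<^sup>+z. ennreal (p x z) * ennreal ((g x)^2) \<partial>M \<partial>M)"
    by (rule swap) measurable
  also have "\<dots> = (\<integral>\<^sup>+x. (\<integral>\<^sup>+z. ennreal (p x z) \<partial>M) * ennreal ((g x)^2) \<partial>M)"
    by (intro nn_integral_cong nn_integral_multc) measurable
  also have "\<dots> = (\<integral>\<^sup>+x. ennreal ((g x)^2) \<partial>M)" by (simp add: p_int1)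
  finally show ?thesis .
qed

lemma sqrt_bound: "0 \<le> t \<Longrightarrow> t \<le> 1 \<Longrightarrow> 0 \<le> v \<Longrightarrow> v \<le> 1 - t \<Longrightarrow> sqrt v \<le> 1 - t/2"
proof -
  assume t: "0 \<le> t" "t \<le> 1" and v: "0 \<le> v" "v \<le> 1 - t"
  have e: "(1 - t/2)^2 = 1 - t + t^2/4" by (simp add: power2_eq_square field_simps)
  have "t^2/4 \<ge> 0" by simp
  then have "v \<le> (1 - t/2)^2" using v e by linarith
  then have "sqrt v \<le> sqrt ((1 - t/2)^2)" by (rule real_sqrt_le_mono)
  also have "\<dots> = 1 - t/2" using t by simp
  finally show ?thesis .
qed

lemma main_bound:
  assumes C1P: "C1P > 0" and PI: "\<And>f x r. L_infty_loc M f \<Longrightarrow> r \<ge> r0P \<Longrightarrow>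
     (\<integral>\<^sup>+ y. indicator (cball x r) y * ennreal ((f y - ball_avg M f (cball x r))^2) \<partial>M)
       \<le> ennreal (C1P * r^2) * (\<integral>\<^sup>+ y. indicator (cball x (C2*r)) y * grad_sq M h f y \<partial>M)"
    and r0P: "r0P > 0" and R: "R \<ge> r0P" and sub: "cball x r \<subseteq> cball x R" and dbl: "2 * measure M (cball x r) \<le> measure M (cball x R)"
    and c1: "c1 > 0" and low: "\<And>w. AE y in M. c1 / measure M (cball w h) * indicator (cball w h) y \<le> p w y"
    and al: "\<alpha> > 0" and A: "AE z in M \<Otimes>\<^sub>M M. \<alpha> * p (fst z) (snd z) \<le> p2 M p (fst z) (snd z)"
    and fL: "in_L2_on M (cball x r) f" and f1: "L2_norm_on M (cball x r) f = 1"
  shows "L2_norm_on M (cball x r) (P_on M p (cball x r) f) \<le> 1 - c1 * \<alpha> / (16 * C1P * R^2)"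
proof -
  let ?B = "cball x r"
  have fm[measurable]: "f \<in> borel_measurable M" using fL unfolding in_L2_on_def by simp
  have fi: "integrable M (\<lambda>y. indicator ?B y *\<^sub>R (f y)^2)" using fL unfolding in_L2_on_def set_integrable_def by simp
  have lint1: "(LINT y:?B|M. (f y)^2) = 1" using f1 unfolding L2_norm_on_def by simp
  define g where "g y = indicator ?B y * f y" for y
  have gm[measurable]: "g \<in> borel_measurable M" unfolding g_def by measurable
  have g2: "(g y)^2 = indicator ?B y *\<^sub>R (f y)^2" for y unfolding g_def by (simp add: indicator_def)
  have int1: "(\<integral>\<^sup>+y. ennreal ((g y)^2) \<partial>M) = 1"
  proof -
    have "(\<integral>\<^sup>+y. ennreal ((g y)^2) \<partial>M) = (\<integral>\<^sup>+y. ennreal (indicator ?B y *\<^sub>R (f y)^2) \<partial>M)" by (simp only: g2)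
    also have "\<dots> = ennreal (\<integral>y. indicator ?B y *\<^sub>R (f y)^2 \<partial>M)"
      by (rule nn_integral_eq_integral[OF fi]) simp
    also have "\<dots> = 1" using lint1 unfolding set_lebesgue_integral_def by simp
    finally show ?thesis .
  qed
  have gfin: "(\<integral>\<^sup>+y. ennreal ((g y)^2) \<partial>M) < \<infinity>" using int1 by simp
  define m where "m z = (\<integral>w. g w * p z w \<partial>M)" for z
  have mm[measurable]: "m \<in> borel_measurable M" unfolding m_def by measurable
  have Pm: "P_on M p ?B f z = m z" for z
    unfolding P_on_def set_lebesgue_integral_def m_def g_def by (simp add: mult.assoc)
  define V where "V = (\<integral>\<^sup>+z. \<integral>\<^sup>+x. ennreal (p z x) * ennreal ((g x - m z)^2) \<partial>M \<partial>M)"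
  define Mm where "Mm = (\<integral>\<^sup>+z. ennreal ((m z)^2) \<partial>M)"
  have VM: "V + Mm = 1"
  proof -
    have "V + Mm = (\<integral>\<^sup>+z. (\<integral>\<^sup>+x. ennreal (p z x) * ennreal ((g x - m z)^2) \<partial>M) + ennreal ((m z)^2) \<partial>M)"
      unfolding V_def Mm_def by (rule nn_integral_add[symmetric]) measurable
    also have "\<dots> = (\<integral>\<^sup>+z. \<integral>\<^sup>+x. ennreal (p z x) * ennreal ((g x)^2) \<partial>M \<partial>M)"
      by (intro nn_integral_cong) (unfold m_def, rule variance[OF gm gfin])
    also have "\<dots> = 1" using mass[OF gm] int1 by simp
    finally show ?thesis .
  qed
  define E where "E = (\<integral>\<^sup>+y. grad_sq M h g y \<partial>M)"
  define D where "D = (\<integral>\<^sup>+x. \<integral>\<^sup>+y. ennreal (p x y) * ennreal ((g y - g x)^2) \<partial>M \<partial>M)"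
  define T where "T = (\<integral>\<^sup>+x. \<integral>\<^sup>+y. \<integral>\<^sup>+z. ennreal (p x z) * ennreal (p y z) * ennreal ((g y - g x)^2) \<partial>M \<partial>M \<partial>M)"
  have s1: "1 \<le> ennreal (2 * C1P * R^2) * E"
    using poinc_cons[OF C1P PI gm _ sub dbl R] int1 unfolding E_def g_def by (simp add: indicator_def)
  have s2: "E \<le> ennreal (1/c1) * D"
  proof -
    have "E \<le> (\<integral>\<^sup>+x. \<integral>\<^sup>+y. ennreal (1/c1 * (p x y * (g y - g x)^2)) \<partial>M \<partial>M)"
      unfolding E_def by (intro nn_integral_mono grad_le_p[OF gm c1 low])
    also have "\<dots> = (\<integral>\<^sup>+x. ennreal (1/c1) * (\<integral>\<^sup>+y. ennreal (p x y) * ennreal ((g y - g x)^2) \<partial>M) \<partial>M)"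
    proof (intro nn_integral_cong)
      fix x
      have "(\<integral>\<^sup>+y. ennreal (1/c1 * (p x y * (g y - g x)^2)) \<partial>M) = (\<integral>\<^sup>+y. ennreal (1/c1) * (ennreal (p x y) * ennreal ((g y - g x)^2)) \<partial>M)"
      proof (intro nn_integral_cong)
        fix y
        have "ennreal (1/c1 * (p x y * (g y - g x)^2)) = ennreal (1/c1) * ennreal (p x y * (g y - g x)^2)"
          by (rule ennreal_mult) (use c1 p_nonneg in auto)
        also have "ennreal (p x y * (g y - g x)^2) = ennreal (p x y) * ennreal ((g y - g x)^2)"
          by (rule ennreal_mult) (use p_nonneg in auto)
        finally show "ennreal (1/c1 * (p x y * (g y - g x)^2)) = ennreal (1/c1) * (ennreal (p x y) * ennreal ((g y - g x)^2))" .
      qed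
      also have "\<dots> = ennreal (1/c1) * (\<integral>\<^sup>+y. ennreal (p x y) * ennreal ((g y - g x)^2) \<partial>M)"
        by (rule nn_integral_cmult) measurable
      finally show "(\<integral>\<^sup>+y. ennreal (1/c1 * (p x y * (g y - g x)^2)) \<partial>M) = ennreal (1/c1) * (\<integral>\<^sup>+y. ennreal (p x y) * ennreal ((g y - g x)^2) \<partial>M)" .
    qed
    also have "\<dots> = ennreal (1/c1) * D" unfolding D_def by (rule nn_integral_cmult) measurable
    finally show ?thesis .
  qed
  have s3: "D \<le> ennreal (1/\<alpha>) * T" unfolding D_def T_def by (rule E2[OF gm al A])
  have s4: "T \<le> 4 * V"
  proof -
    have "T \<le> 2 * (\<integral>\<^sup>+x. \<integral>\<^sup>+y. \<integral>\<^sup>+z. ennreal (p x z) * ennreal (p y z) * ennreal ((g x - m z)^2) \<partial>M \<partial>M \<partial>M)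
     + 2 * (\<integral>\<^sup>+x. \<integral>\<^sup>+y. \<integral>\<^sup>+z. ennreal (p x z) * ennreal (p y z) * ennreal ((g y - m z)^2) \<partial>M \<partial>M \<partial>M)"
      unfolding T_def by (rule E3a[OF gm mm])
    also have "\<dots> = 4 * V" unfolding E3b[OF gm mm] E3c[OF gm mm] V_def
      by (simp add: distrib_right[symmetric] del: distrib_right)
    finally show ?thesis .
  qed
  define \<kappa> where "\<kappa> = 8 * C1P * R^2 / (c1 * \<alpha>)"
  have Rpos: "R > 0" using R r0P by simp
  have kpos: "\<kappa> > 0" unfolding \<kappa>_def using C1P Rpos c1 al by simp
  have Vle: "V \<le> 1" using VM by (metis add_increasing2 order_refl zero_le)
  have Mle: "Mm \<le> 1" using VM by (metis add_increasing order_refl zero_le)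
  define v where "v = enn2real V"
  define mv where "mv = enn2real Mm"
  have Vv: "V = ennreal v" unfolding v_def using Vle by (cases V) (auto simp: top_unique)
  have Mv: "Mm = ennreal mv" unfolding mv_def using Mle by (cases Mm) (auto simp: top_unique)
  have v0: "v \<ge> 0" and mv0: "mv \<ge> 0" unfolding v_def mv_def by auto
  have vm1: "v + mv = 1" using VM unfolding Vv Mv using v0 mv0 by (simp add: ennreal_plus[symmetric] del: ennreal_plus)
  have "1 \<le> ennreal (2 * C1P * R^2) * (ennreal (1/c1) * (ennreal (1/\<alpha>) * (4 * V)))"
  proof -
    have "1 \<le> ennreal (2 * C1P * R^2) * E" by (rule s1)
    also have "\<dots> \<le> ennreal (2 * C1P * R^2) * (ennreal (1/c1) * D)" by (intro mult_left_mono s2) simp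
    also have "\<dots> \<le> ennreal (2 * C1P * R^2) * (ennreal (1/c1) * (ennreal (1/\<alpha>) * T))" by (intro mult_left_mono s3) simp_all
    also have "\<dots> \<le> ennreal (2 * C1P * R^2) * (ennreal (1/c1) * (ennreal (1/\<alpha>) * (4 * V)))" by (intro mult_left_mono s4) simp_all
    finally show ?thesis .
  qed
  also have "ennreal (2 * C1P * R^2) * (ennreal (1/c1) * (ennreal (1/\<alpha>) * (4 * V))) = ennreal (2 * C1P * R^2 * (1/c1 * (1/\<alpha> * (4 * v))))"
  proof -
    have em: "ennreal a * ennreal b = ennreal (a*b)" if "0 \<le> a" "0 \<le> b" for a b
      using that by (simp add: ennreal_mult)
    have a1: "4 * ennreal v = ennreal (4 * v)" using em[of 4 v] v0 by simp
    have a2: "ennreal (1/\<alpha>) * ennreal (4 * v) = ennreal (1/\<alpha> * (4 * v))" using em al v0 by simp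
    have a3: "ennreal (1/c1) * ennreal (1/\<alpha> * (4 * v)) = ennreal (1/c1 * (1/\<alpha> * (4 * v)))" using em c1 al v0 by simp
    have a4: "ennreal (2 * C1P * R^2) * ennreal (1/c1 * (1/\<alpha> * (4 * v))) = ennreal (2 * C1P * R^2 * (1/c1 * (1/\<alpha> * (4 * v))))"
      by (rule em) (use C1P c1 al v0 in auto)
    show ?thesis unfolding Vv a1 a2 a3 a4 ..
  qed
  finally have X: "ennreal 1 \<le> ennreal (2 * C1P * R^2 * (1/c1 * (1/\<alpha> * (4 * v))))" by simp
  have nn: "0 \<le> 2 * C1P * R^2 * (1/c1 * (1/\<alpha> * (4 * v)))" using C1P c1 al v0 by simp
  have "1 \<le> 2 * C1P * R^2 * (1/c1 * (1/\<alpha> * (4 * v)))" using X nn ennreal_le_iff by blast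
  then have kv: "1 \<le> \<kappa> * v" unfolding \<kappa>_def by (simp add: field_simps)
  define t where "t = 1 / \<kappa>"
  have t0: "t \<ge> 0" unfolding t_def using kpos by simp
  have tv: "t \<le> v" unfolding t_def using kv kpos by (simp add: field_simps)
  have t1: "t \<le> 1" using tv vm1 mv0 by linarith
  have mvt: "mv \<le> 1 - t" using tv vm1 by linarith
  have lint: "(LINT y:?B|M. (P_on M p ?B f y)^2) \<le> mv"
  proof -
    have "(LINT y:?B|M. (P_on M p ?B f y)^2) = (\<integral>y. indicator ?B y * (m y)^2 \<partial>M)"
      unfolding set_lebesgue_integral_def Pm by simp
    also have "\<dots> = enn2real (\<integral>\<^sup>+y. ennreal (indicator ?B y * (m y)^2) \<partial>M)"
    proof (rule integral_eq_nn_integral)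
      show "(\<lambda>y. indicator ?B y * (m y)^2) \<in> borel_measurable M" by measurable
      show "AE y in M. 0 \<le> indicator ?B y * (m y)^2" by (simp add: indicator_def)
    qed
    also have "\<dots> \<le> enn2real Mm"
    proof (rule enn2real_mono)
      show "(\<integral>\<^sup>+y. ennreal (indicator ?B y * (m y)^2) \<partial>M) \<le> Mm"
        unfolding Mm_def by (intro nn_integral_mono ennreal_leI) (simp add: indicator_def)
      show "Mm < top" using Mle by (simp add: le_less_trans)
    qed
    finally show ?thesis unfolding mv_def .
  qed
  have "(LINT y:?B|M. (P_on M p ?B f y)^2) \<ge> 0"
    unfolding set_lebesgue_integral_def by (rule integral_nonneg_AE) (simp add: indicator_def)
  then have "L2_norm_on M ?B (P_on M p ?B f) \<le> 1 - t/2"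
    unfolding L2_norm_on_def using lint mvt t0 t1 by (intro sqrt_bound) auto
  also have "1 - t/2 = 1 - c1 * \<alpha> / (16 * C1P * R^2)" unfolding t_def \<kappa>_def by simp
  finally show ?thesis .
qed

end

context setting begin

lemma diam_nonneg: "diamM TYPE('a) \<ge> 0"
proof -
  have "ereal (dist (fst (undefined::'a, undefined::'a)) (snd (undefined::'a, undefined::'a))) \<le> diamM TYPE('a)"
    unfolding diamM_def by (rule SUP_upper) simp
  then show ?thesis by (simp add: zero_ereal_def)
qed

theorem final:
  "\<exists>a>0. \<exists>\<epsilon>0>0. \<forall>x r. h' \<le> r \<longrightarrow> ereal r \<le> ereal \<epsilon>0 * diamM TYPE('a) \<longrightarrow>
           op_norm_on M p (cball x r) \<le> ereal (1 - a / r^2)"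
proof -
  obtain R0 K \<epsilon> where R0: "R0 > 0" and K1: "K \<ge> 1" and ep: "\<epsilon> > 0"
    and RD: "\<And>x S. S \<ge> R0 \<Longrightarrow> ereal S \<le> ereal \<epsilon> * diamM TYPE('a) \<Longrightarrow>
       2 * measure M (cball x S) \<le> measure M (cball x (K * S))"
    by (rule revdoub) blast
  obtain C1P C2 r0P where C1P: "C1P > 0" and C2: "C2 \<ge> 1" and r0P: "r0P > 0"
    and PI: "\<And>f x r. L_infty_loc M f \<Longrightarrow> r \<ge> r0P \<Longrightarrow>
     (\<integral>\<^sup>+ y. indicator (cball x r) y * ennreal ((f y - ball_avg M f (cball x r))^2) \<partial>M)
       \<le> ennreal (C1P * r^2) * (\<integral>\<^sup>+ y. indicator (cball x (C2*r)) y * grad_sq M h f y \<partial>M)"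
    by (rule poinc_bounds) blast
  obtain c1 C1 where c1: "c1 > 0" and "C1 > 0" and cb: "\<And>w. AE y in M. c1 / measure M (cball w h) * indicator (cball w h) y \<le> p w y \<and>
        p w y \<le> C1 / measure M (cball w h') * indicator (cball w h') y"
    by (rule compat_bounds) blast
  have low: "AE y in M. c1 / measure M (cball w h) * indicator (cball w h) y \<le> p w y" for w
    using cb[of w] by (rule eventually_mono) simp
  obtain \<alpha> where al: "\<alpha> > 0" and A: "AE z in M \<Otimes>\<^sub>M M. \<alpha> * p (fst z) (snd z) \<le> p2 M p (fst z) (snd z)"
    by (rule alpha_bound) blast
  define Ac where "Ac = 1 + R0/h' + r0P/h'"
  have Ac1: "Ac \<ge> 1" unfolding Ac_def using R0 r0P h'pos by simp
  define a where "a = c1 * \<alpha> / (16 * C1P * K^2 * Ac^2)"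
  define \<epsilon>0 where "\<epsilon>0 = \<epsilon> / Ac"
  have apos: "a > 0" unfolding a_def using c1 al C1P K1 Ac1 by simp
  have e0pos: "\<epsilon>0 > 0" unfolding \<epsilon>0_def using ep Ac1 by simp
  have main: "op_norm_on M p (cball x r) \<le> ereal (1 - a / r^2)"
    if r: "h' \<le> r" and d: "ereal r \<le> ereal \<epsilon>0 * diamM TYPE('a)" for x r
  proof -
    have rpos: "r > 0" using r h'pos by simp
    define S where "S = max r (max R0 r0P)"
    have rS: "r \<le> S" and R0S: "R0 \<le> S" and r0S: "r0P \<le> S" unfolding S_def by auto
    have "R0 \<le> R0 * (r/h')" using R0 r h'pos by (simp add: le_divide_eq)
    moreover have "r0P \<le> r0P * (r/h')" using r0P r h'pos by (simp add: le_divide_eq)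
    ultimately have SA: "S \<le> Ac * r" unfolding S_def Ac_def using rpos R0 r0P by (simp add: algebra_simps)
    have dS: "ereal S \<le> ereal \<epsilon> * diamM TYPE('a)"
    proof -
      have "ereal S \<le> ereal Ac * ereal r" using SA by simp
      also have "\<dots> \<le> ereal Ac * (ereal \<epsilon>0 * diamM TYPE('a))"
        by (rule ereal_mult_left_mono[OF d]) (use Ac1 in simp)
      also have "\<dots> = ereal \<epsilon> * diamM TYPE('a)"
        unfolding \<epsilon>0_def using Ac1 by (simp add: mult.assoc[symmetric])
      finally show ?thesis .
    qed
    define R where "R = K * S"
    have SR: "S \<le> R" unfolding R_def using K1 rS rpos by (simp add: mult_le_cancel_right1)
    have dbl: "2 * measure M (cball x r) \<le> measure M (cball x R)"
    proof -
      have "measure M (cball x r) \<le> measure M (cball x S)"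
        by (rule measure_mono_fmeasurable) (use rS in \<open>auto simp: sets_M\<close>)
      then show ?thesis using RD[OF R0S dS, of x] unfolding R_def by simp
    qed
    have sub: "cball x r \<subseteq> cball x R" using rS SR by auto
    have Rr: "R \<ge> r0P" using r0S SR by simp
    have Rpos: "R > 0" using rpos rS SR by simp
    have RKA: "R \<le> K * Ac * r" unfolding R_def using SA K1 by (simp add: mult.assoc)
    have bnd: "c1 * \<alpha> / (16 * C1P * R^2) \<ge> a / r^2"
    proof -
      have "R^2 \<le> (K * Ac * r)^2" using RKA Rpos by (intro power_mono) auto
      then have "16 * C1P * R^2 \<le> 16 * C1P * (K * Ac * r)^2" using C1P by simp
      then have "c1 * \<alpha> / (16 * C1P * (K * Ac * r)^2) \<le> c1 * \<alpha> / (16 * C1P * R^2)"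
      proof (rule divide_left_mono)
        have "0 < K * Ac * r" using K1 Ac1 rpos by simp
        then have "0 < (K * Ac * r)^2" by (rule zero_less_power)
        then have "0 < 16 * C1P * (K * Ac * r)^2" using C1P by simp
        moreover have "0 < 16 * C1P * R^2" using C1P Rpos by simp
        ultimately show "0 < 16 * C1P * (K * Ac * r)^2 * (16 * C1P * R^2)" by (rule mult_pos_pos)
      qed (use c1 al \<open>16 * C1P * R^2 \<le> 16 * C1P * (K * Ac * r)^2\<close> in auto)
      moreover have "c1 * \<alpha> / (16 * C1P * (K * Ac * r)^2) = a / r^2"
        unfolding a_def by (simp add: power_mult_distrib field_simps)
      ultimately show ?thesis by simp
    qed
    show ?thesis unfolding op_norm_on_def
    proof (rule SUP_least)
      fix f assume "f \<in> {f. in_L2_on M (cball x r) f \<and> L2_norm_on M (cball x r) f = 1}"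
      then have fL: "in_L2_on M (cball x r) f" and f1: "L2_norm_on M (cball x r) f = 1" by auto
      have "L2_norm_on M (cball x r) (P_on M p (cball x r) f) \<le> 1 - c1 * \<alpha> / (16 * C1P * R^2)"
        by (rule main_bound[OF C1P PI r0P Rr sub dbl c1 low al A fL f1])
      also have "\<dots> \<le> 1 - a / r^2" using bnd by simp
      finally show "ereal (L2_norm_on M (cball x r) (P_on M p (cball x r) f)) \<le> ereal (1 - a / r^2)" by simp
    qed
  qed
  show ?thesis using apos e0pos main by blast
qed

end

theorem proposition8p4:
  fixes M :: "'a::metric_space measure"
    and p :: "'a \<Rightarrow> 'a \<Rightarrow> real"
    and b h h' :: real
  assumes "metric_measure_space M"
    and "0 < b"
    and "quasi_b_geodesic b TYPE('a)"
    and "VD_loc M" and "VD_infty M"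
    and "poincare_h M h"
    and "markov_kernel M p"
    and "compatible M p h h'"
    and "h > b"
  shows "\<exists>a>0. \<exists>\<epsilon>0>0. \<forall>x r. h' \<le> r \<longrightarrow> ereal r \<le> ereal \<epsilon>0 * diamM TYPE('a) \<longrightarrow>
           op_norm_on M p (cball x r) \<le> ereal (1 - a / r^2)"
proof -
  interpret setting M p b h h' using assms by unfold_locales
  show ?thesis by (rule final)
qed

end
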